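(* Let $n\ge1$. (i) Any $k\ge1$ points of $A_n$ have, altogether, at least $k$ coordinates that are not coordinates of any point of $D_{n-1}$. (ii) For any single point $a_i\in D_{n-1}$, any $k\ge1$ points of $A_n$ have, altogether, at least $k+1$ coordinates that are not coordinates of $a_i$.
   Context: Let $X_1,X_2,X_3$ be pairwise disjoint nonempty sets and $\Omega=X_1\times X_2\times X_3$, with projections $\Pi_i:\Omega\to X_i$. For $S\subset\Omega$, the coordinates of $S$ are the elements of $\Pi_1S\cup\Pi_2S\cup\Pi_3S$. Construction: fix pairwise distinct elements $x_1,y_1,\alpha_{5k-4},\alpha_{5k-1}$ ($k\ge1$) of $X_1$; pairwise distinct elements $x_2,y_2,\alpha_{5k-3},\alpha_{5k}$ ($k\ge1$) of $X_2$; pairwise distinct elements $x_3,z_3,\alpha_{5k-2}$ ($k\ge1$) of $X_3$. Set the convention $\alpha_{-3}:=y_2$, $\alpha_{-2}:=z_3$. Define $a_1=(x_1,x_2,x_3)$, $a_2=(y_1,y_2,x_3)$, $a_3=(y_1,x_2,z_3)$ and for $n\ge1$: $a_{5n-1}=(\alpha_{5n-4},\alpha_{5n-3},\alpha_{5n-2})$, $a_{5n}=(\alpha_{5n-1},\alpha_{5n},\alpha_{5n-2})$, $a_{5n+1}=(\alpha_{5n-4},\alpha_{5n},\alpha_{5n-7})$, $a_{5n+2}=(\alpha_{5n-1},\alpha_{5n-3},x_3)$, $a_{5n+3}=(x_1,\alpha_{5n-8},\alpha_{5n-2})$. Let $T=\{a_i:i\ge1\}$, $D_n=\{a_1,\dots,a_{5n+3}\}$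 for $n\ge0$, $A_0=D_0$ and $A_n=D_n\setminus D_{n-1}$ for $n\ge1$. *)

theory Defs
  imports Main
begin

text \<open>Points of \<Omega> = X1 \<times> X2 \<times> X3 are triples (p1, p2, p3); the sets X1, X2, X3 live in a
common type 'a (they are assumed pairwise disjoint in the theorem).\<close>

definition coords :: "('a \<times> 'a \<times> 'a) set \<Rightarrow> 'a set" where
  "coords S = (fst ` S) \<union> ((fst \<circ> snd) ` S) \<union> ((snd \<circ> snd) ` S)"

definition alph :: "'a \<Rightarrow> 'a \<Rightarrow> (nat \<Rightarrow> 'a) \<Rightarrow> int \<Rightarrow> 'a" where
  "alph y2 z3 al i = (if i = -3 then y2 else if i = -2 then z3 else al (nat i))"

text \<open>The points a_i, i >= 1.  For i >= 4 write n = (i+1) div 5, so that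
  i \<in> {5n-1, 5n, 5n+1, 5n+2, 5n+3}.\<close>
definition pt :: "'a \<Rightarrow> 'a \<Rightarrow> 'a \<Rightarrow> 'a \<Rightarrow> 'a \<Rightarrow> 'a \<Rightarrow> (nat \<Rightarrow> 'a) \<Rightarrow> nat \<Rightarrow> 'a \<times> 'a \<times> 'a" where
  "pt x1 y1 x2 y2 x3 z3 al i =
     (let \<alpha> = alph y2 z3 al; n = int ((i + 1) div 5) in
      if i = 1 then (x1, x2, x3)
      else if i = 2 then (y1, y2, x3)
      else if i = 3 then (y1, x2, z3)
      else if i mod 5 = 4 then (\<alpha> (5*n-4), \<alpha> (5*n-3), \<alpha> (5*n-2))
      else if i mod 5 = 0 then (\<alpha> (5*n-1), \<alpha> (5*n), \<alpha> (5*n-2))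
      else if i mod 5 = 1 then (\<alpha> (5*n-4), \<alpha> (5*n), \<alpha> (5*n-7))
      else if i mod 5 = 2 then (\<alpha> (5*n-1), \<alpha> (5*n-3), x3)
      else (x1, \<alpha> (5*n-8), \<alpha> (5*n-2)))"

definition Dset :: "'a \<Rightarrow> 'a \<Rightarrow> 'a \<Rightarrow> 'a \<Rightarrow> 'a \<Rightarrow> 'a \<Rightarrow> (nat \<Rightarrow> 'a) \<Rightarrow> nat \<Rightarrow> ('a \<times> 'a \<times> 'a) set" where
  "Dset x1 y1 x2 y2 x3 z3 al n = pt x1 y1 x2 y2 x3 z3 al ` {1 .. 5*n+3}"

definition Aset :: "'a \<Rightarrow> 'a \<Rightarrow> 'a \<Rightarrow> 'a \<Rightarrow> 'a \<Rightarrow> 'a \<Rightarrow> (nat \<Rightarrow> 'a) \<Rightarrow> nat \<Rightarrow> ('a \<times> 'a \<times> 'a) set" where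
  "Aset x1 y1 x2 y2 x3 z3 al n =
     (if n = 0 then Dset x1 y1 x2 y2 x3 z3 al 0
      else Dset x1 y1 x2 y2 x3 z3 al n - Dset x1 y1 x2 y2 x3 z3 al (n - 1))"

end

theory Submission
  imports Defs
begin

locale L =
  fixes X1 X2 X3 :: "'a set" and x1 y1 x2 y2 x3 z3 :: 'a and al :: "nat \<Rightarrow> 'a"
  assumes disj: "X1 \<inter> X2 = {}" "X1 \<inter> X3 = {}" "X2 \<inter> X3 = {}"
    and mem1: "x1 \<in> X1" "y1 \<in> X1" "\<forall>k\<ge>1. al (5*k-4) \<in> X1 \<and> al (5*k-1) \<in> X1"
    and mem2: "x2 \<in> X2" "y2 \<in> X2" "\<forall>k\<ge>1. al (5*k-3) \<in> X2 \<and> al (5*k) \<in> X2"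
    and mem3: "x3 \<in> X3" "z3 \<in> X3" "\<forall>k\<ge>1. al (5*k-2) \<in> X3"
    and dist1: "x1 \<noteq> y1" "\<forall>k\<ge>1. al (5*k-4) \<notin> {x1, y1} \<and> al (5*k-1) \<notin> {x1, y1}"
      "inj_on al ({5*k-4 | k. k \<ge> 1} \<union> {5*k-1 | k. k \<ge> 1})"
    and dist2: "x2 \<noteq> y2" "\<forall>k\<ge>1. al (5*k-3) \<notin> {x2, y2} \<and> al (5*k) \<notin> {x2, y2}"
      "inj_on al ({5*k-3 | k. k \<ge> 1} \<union> {5*k | k. k \<ge> 1})"
    and dist3: "x3 \<noteq> z3" "\<forall>k\<ge>1. al (5*k-2) \<notin> {x3, z3}"
      "inj_on al {5*k-2 | k. k \<ge> 1}"
begin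

definition "C1 = {5*k-4 | k::nat. k \<ge> 1} \<union> {5*k-1 | k. k \<ge> 1}"
definition "C2 = {5*k-3 | k::nat. k \<ge> 1} \<union> {5*k | k. k \<ge> 1}"
definition "C3 = {5*k-2 | k::nat. k \<ge> 1}"

lemma cls:
  assumes "1 \<le> j"
  shows "(j \<in> C1 \<and> al j \<in> X1 \<and> al j \<notin> {x1,y1}) \<or> (j \<in> C2 \<and> al j \<in> X2 \<and> al j \<notin> {x2,y2})
     \<or> (j \<in> C3 \<and> al j \<in> X3 \<and> al j \<notin> {x3,z3})"
proof -
  define k where "k = (j+4) div 5"
  have k1: "k \<ge> 1" using assms unfolding k_def by simp
  have "j = 5*k-4 \<or> j = 5*k-3 \<or> j = 5*k-2 \<or> j = 5*k-1 \<or> j = 5*k" unfolding k_def by presburger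
  then show ?thesis using k1 mem1 mem2 mem3 dist1 dist2 dist3 unfolding C1_def C2_def C3_def
    by (elim disjE) blast+
qed

lemma al_inj: assumes "1 \<le> i" "1 \<le> j" "al i = al j" shows "i = j"
  using cls[OF assms(1)] cls[OF assms(2)] assms(3) disj dist1(3) dist2(3) dist3(3)
  unfolding C1_def[symmetric] C2_def[symmetric] C3_def[symmetric]
  by (auto dest: inj_onD)

lemma al_inj_iff [simp]: "1 \<le> i \<Longrightarrow> 1 \<le> j \<Longrightarrow> al i = al j \<longleftrightarrow> i = j"
  using al_inj by blast

lemma al_ne: assumes "1 \<le> j" shows "al j \<noteq> x1" "al j \<noteq> y1" "al j \<noteq> x2" "al j \<noteq> y2" "al j \<noteq> x3" "al j \<noteq> z3"
  using cls[OF assms] disj mem1 mem2 mem3 by blast+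


abbreviation "P \<equiv> pt x1 y1 x2 y2 x3 z3 al"
abbreviation "AL \<equiv> alph y2 z3 al"

lemma al_ne2: assumes "1 \<le> j" shows "x1 \<noteq> al j" "y1 \<noteq> al j" "x2 \<noteq> al j" "y2 \<noteq> al j" "x3 \<noteq> al j" "z3 \<noteq> al j"
  using al_ne[OF assms] by metis+

lemma base_ne: "x1 \<noteq> z3" "x1 \<noteq> x3" "x1 \<noteq> x2" "x1 \<noteq> y2" "y2 \<noteq> x1" "y2 \<noteq> x3" "y2 \<noteq> z3"
  using disj mem1 mem2 mem3 by blast+

lemma alph_int: "1 \<le> j \<Longrightarrow> AL (int j) = al j"
  by (simp add: alph_def)

lemma alph_lin: "1 \<le> m \<Longrightarrow> c \<le> 4 \<Longrightarrow> AL (5 * int m - int c) = al (5*m - c)"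
proof -
  assume "1 \<le> m" "c \<le> 4"
  then have e: "5 * int m - int c = int (5*m - c)" and "1 \<le> 5*m - c" by auto
  then show ?thesis unfolding e using alph_int by blast
qed

lemma ptG: "4 \<le> i \<Longrightarrow> (i+1) div 5 = m \<Longrightarrow> i mod 5 = r \<Longrightarrow> P i =
      (if r = 4 then (AL (5*int m-4), AL (5*int m-3), AL (5*int m-2))
      else if r = 0 then (AL (5*int m-1), AL (5*int m), AL (5*int m-2))
      else if r = 1 then (AL (5*int m-4), AL (5*int m), AL (5*int m-7))
      else if r = 2 then (AL (5*int m-1), AL (5*int m-3), x3)
      else (x1, AL (5*int m-8), AL (5*int m-2)))"
  unfolding pt_def Let_def by auto

lemma pt1: "1 \<le> m \<Longrightarrow> P (5*m-1) = (al (5*m-4), al (5*m-3), al (5*m-2))"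
proof -
  assume m: "1 \<le> m"
  obtain q where q: "m = Suc q" using m by (cases m) auto
  have d: "4 \<le> 5*m-1" "(5*m-1+1) div 5 = m" "(5*m-1) mod 5 = 4" unfolding q by simp_all
  have "P (5*m-1) = (AL (5*int m-4), AL (5*int m-3), AL (5*int m-2))"
    by (rule trans[OF ptG[OF d]]) simp
  then show ?thesis using m alph_lin[of m 4] alph_lin[of m 3] alph_lin[of m 2] by simp
qed
lemma pt2: "1 \<le> m \<Longrightarrow> P (5*m) = (al (5*m-1), al (5*m), al (5*m-2))"
proof -
  assume m: "1 \<le> m"
  obtain q where q: "m = Suc q" using m by (cases m) auto
  have d: "4 \<le> 5*m" "(5*m+1) div 5 = m" "(5*m) mod 5 = 0" unfolding q by simp_all
  have "P (5*m) = (AL (5*int m-1), AL (5*int m), AL (5*int m-2))"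
    by (rule trans[OF ptG[OF d]]) simp
  then show ?thesis using m alph_lin[of m 1] alph_lin[of m 0] alph_lin[of m 2] by simp
qed
lemma pt3: "1 \<le> m \<Longrightarrow> P (5*m+1) = (al (5*m-4), al (5*m), AL (5 * int m - 7))"
proof -
  assume m: "1 \<le> m"
  obtain q where q: "m = Suc q" using m by (cases m) auto
  have d: "4 \<le> 5*m+1" "(5*m+1+1) div 5 = m" "(5*m+1) mod 5 = 1" unfolding q by simp_all
  have "P (5*m+1) = (AL (5*int m-4), AL (5*int m), AL (5*int m-7))"
    by (rule trans[OF ptG[OF d]]) simp
  then show ?thesis using m alph_lin[of m 4] alph_lin[of m 0] by simp
qed
lemma pt4: "1 \<le> m \<Longrightarrow> P (5*m+2) = (al (5*m-1), al (5*m-3), x3)"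
proof -
  assume m: "1 \<le> m"
  obtain q where q: "m = Suc q" using m by (cases m) auto
  have d: "4 \<le> 5*m+2" "(5*m+2+1) div 5 = m" "(5*m+2) mod 5 = 2" unfolding q by simp_all
  have "P (5*m+2) = (AL (5*int m-1), AL (5*int m-3), x3)"
    by (rule trans[OF ptG[OF d]]) simp
  then show ?thesis using m alph_lin[of m 1] alph_lin[of m 3] by simp
qed
lemma pt5: "1 \<le> m \<Longrightarrow> P (5*m+3) = (x1, AL (5 * int m - 8), al (5*m-2))"
proof -
  assume m: "1 \<le> m"
  obtain q where q: "m = Suc q" using m by (cases m) auto
  have d: "4 \<le> 5*m+3" "(5*m+3+1) div 5 = m" "(5*m+3) mod 5 = 3" unfolding q by simp_all
  have "P (5*m+3) = (x1, AL (5*int m-8), AL (5*int m-2))"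
    by (rule trans[OF ptG[OF d]]) simp
  then show ?thesis using m alph_lin[of m 2] by simp
qed
lemma pt_small: "P (Suc 0) = (x1,x2,x3)" "P 1 = (x1,x2,x3)" "P 2 = (y1,y2,x3)" "P 3 = (y1,x2,z3)"
  by (simp_all add: pt_def)

lemma c7: "AL (5 * int m - 7) = (if m = 1 then z3 else al (5*m-7))" if "1 \<le> m"
proof (cases "m = 1")
  case True then show ?thesis by (simp add: alph_def)
next
  case False
  then have e: "5 * int m - 7 = int (5*m-7)" and f: "1 \<le> 5*m-7" using that by auto
  have h: "AL (5 * int m - 7) = al (5*m-7)" using e alph_int[OF f] by metis
  show ?thesis using False h by simp
qed
lemma c8: "AL (5 * int m - 8) = (if m = 1 then y2 else al (5*m-8))" if "1 \<le> m"
proof (cases "m = 1")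
  case True then show ?thesis by (simp add: alph_def)
next
  case False
  then have e: "5 * int m - 8 = int (5*m-8)" and f: "1 \<le> 5*m-8" using that by auto
  have h: "AL (5 * int m - 8) = al (5*m-8)" using e alph_int[OF f] by metis
  show ?thesis using False h by simp
qed

lemma pt_split: fixes i :: nat assumes "4 \<le> i"
  obtains m :: nat where "1 \<le> m" "i = 5*m-1 \<or> i = 5*m \<or> i = 5*m+1 \<or> i = 5*m+2 \<or> i = 5*m+3" "m = (i+1) div 5"
proof -
  define m where "m = (i+1) div 5"
  define r where "r = (i+1) mod 5"
  have "i + 1 = 5*m + r" "r < 5" unfolding m_def r_def by simp_all
  then have "1 \<le> m" "i = 5*m-1 \<or> i = 5*m \<or> i = 5*m+1 \<or> i = 5*m+2 \<or> i = 5*m+3"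
    using assms by linarith+
  then show ?thesis using that m_def by blast
qed

lemma coords_single [simp]: "coords {(u,v,w)} = {u,v,w}"
  by (auto simp: coords_def)
lemma coords_UN: "x \<in> coords S \<longleftrightarrow> (\<exists>s\<in>S. x \<in> coords {s})"
  by (auto simp: coords_def)


lemma coords_img: "x \<in> coords (f ` A) \<longleftrightarrow> (\<exists>i\<in>A. x \<in> coords {f i})"
  by (auto simp: coords_def)

lemma finite_coords: "finite S \<Longrightarrow> finite (coords S)"
  by (simp add: coords_def)

lemma coords_mono: "s \<in> S \<Longrightarrow> coords {s} \<subseteq> coords S"
  by (auto simp: coords_def)

lemma newD: assumes "1 \<le> n" "1 \<le> i" "i+2 \<le> 5*n" "5*n-4 \<le> t"
  shows "al t \<notin> coords {P i}"
proof (cases "i \<le> 3")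
  case True
  then have "i = 1 \<or> i = 2 \<or> i = 3" using assms by linarith
  moreover have "1 \<le> t" using assms by linarith
  ultimately show ?thesis by (auto simp: pt_small al_ne)
next
  case False
  then obtain m where m: "1 \<le> m" "i = 5*m-1 \<or> i = 5*m \<or> i = 5*m+1 \<or> i = 5*m+2 \<or> i = 5*m+3"
    using pt_split[of i] by auto
  have mn: "m < n" using m assms by linarith
  have t1: "1 \<le> t" "5*m < t" using assms mn by linarith+
  from m(2) show ?thesis
  proof (elim disjE)
    assume "i = 5*m-1" then show ?thesis using m t1 pt1[OF m(1)] by auto
  next
    assume "i = 5*m" then show ?thesis using m t1 pt2[OF m(1)] by (auto simp:)
  next
    assume "i = 5*m+1" then show ?thesis using m t1 pt3[OF m(1)] by (auto simp: c7 al_ne)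
  next
    assume "i = 5*m+2" then show ?thesis using m t1 pt4[OF m(1)] by (auto simp: al_ne)
  next
    assume "i = 5*m+3" then show ?thesis using m t1 pt5[OF m(1)] by (auto simp: c8 al_ne)
  qed
qed

lemma oldP: assumes "1 \<le> n" "1 \<le> i" "i+2 \<le> 5*n" "x1 \<in> coords {P i}"
  shows "AL (5 * int n - 8) \<notin> coords {P i}"
proof (cases "i \<le> 3")
  case True
  then have "i = 1 \<or> i = 2 \<or> i = 3" using assms by linarith
  then show ?thesis using assms disj mem1 mem2 mem3 dist1(1) dist2(1) by (auto simp: pt_small c8 al_ne)
next
  case False
  then obtain m where m: "1 \<le> m" "i = 5*m-1 \<or> i = 5*m \<or> i = 5*m+1 \<or> i = 5*m+2 \<or> i = 5*m+3"
    using pt_split[of i] by auto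
  have mn: "m < n" using m assms by linarith
  from m(2) show ?thesis
  proof (elim disjE)
    assume "i = 5*m-1" then show ?thesis using m assms pt1[OF m(1)] by (simp add: al_ne al_ne2)
  next
    assume "i = 5*m" then show ?thesis using m assms pt2[OF m(1)] by (simp add: al_ne al_ne2)
  next
    assume i: "i = 5*m+1"
    have "x1 \<noteq> AL (5 * int m - 7)" using m(1) base_ne al_ne2 by (simp add: c7)
    then have "x1 \<notin> coords {P i}" using m(1) base_ne al_ne2 unfolding i pt3[OF m(1)] by simp
    then show ?thesis using assms(4) by blast
  next
    assume i: "i = 5*m+2"
    have "x1 \<notin> coords {P i}" using m(1) base_ne al_ne2 unfolding i pt4[OF m(1)] by simp
    then show ?thesis using assms(4) by blast
  next
    assume i: "i = 5*m+3"
    have n2: "n \<noteq> 1" "2 \<le> n" using mn m by auto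
    have cn: "AL (5 * int n - 8) = al (5*n-8)" using c8[of n] n2 by simp
    have p1: "1 \<le> 5*n-8" "1 \<le> 5*m-2" using n2 m by auto
    have ne3: "5*n-8 \<noteq> 5*m-2" using mn n2 m(1) by (cases "n = m+1") auto
    have "al (5*n-8) \<noteq> al (5*m-2)" using al_inj[OF p1] ne3 by blast
    moreover have "al (5*n-8) \<noteq> x1" using al_ne p1 by blast
    moreover have "al (5*n-8) \<noteq> AL (5 * int m - 8)"
    proof (cases "m = 1")
      case True then show ?thesis using c8[of m] al_ne p1 by simp
    next
      case False
      then have q: "1 \<le> 5*m-8" "5*n-8 \<noteq> 5*m-8" using m mn by auto
      show ?thesis using c8[of m] False al_inj[OF p1(1) q(1)] q(2) m(1) by auto
    qed
    ultimately show ?thesis unfolding cn i pt5[OF m(1)] by simp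
  qed
qed


lemma main_loc:
  assumes n1: "1 \<le> n"
  shows "(\<forall>S. S \<subseteq> Aset x1 y1 x2 y2 x3 z3 al n \<and> S \<noteq> {} \<longrightarrow>
            card (coords S - coords (Dset x1 y1 x2 y2 x3 z3 al (n - 1))) \<ge> card S)
       \<and> (\<forall>p \<in> Dset x1 y1 x2 y2 x3 z3 al (n - 1). \<forall>S. S \<subseteq> Aset x1 y1 x2 y2 x3 z3 al n \<and> S \<noteq> {} \<longrightarrow>
            card (coords S - coords {p}) \<ge> card S + 1)"
proof -
  define D where "D = Dset x1 y1 x2 y2 x3 z3 al (n - 1)"
  define a4 where "a4 = al (5*n-4)"
  define a3 where "a3 = al (5*n-3)"
  define a2 where "a2 = al (5*n-2)"
  define a1 where "a1 = al (5*n-1)"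
  define a0 where "a0 = al (5*n)"
  define c7 where "c7 = AL (5 * int n - 7)"
  define c8 where "c8 = AL (5 * int n - 8)"
  define B1 where "B1 = (a4,a3,a2)"
  define B2 where "B2 = (a1,a0,a2)"
  define B3 where "B3 = (a4,a0,c7)"
  define B4 where "B4 = (a1,a3,x3)"
  define B5 where "B5 = (x1,c8,a2)"
  have ge: "1 \<le> 5*n-4" "1 \<le> 5*n-3" "1 \<le> 5*n-2" "1 \<le> 5*n-1" "1 \<le> 5*n" using n1 by auto
  have adist: "a4 \<noteq> a3" "a4 \<noteq> a2" "a4 \<noteq> a1" "a4 \<noteq> a0" "a3 \<noteq> a2" "a3 \<noteq> a1" "a3 \<noteq> a0"
     "a2 \<noteq> a1" "a2 \<noteq> a0" "a1 \<noteq> a0"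
    unfolding a4_def a3_def a2_def a1_def a0_def using ge n1 al_inj_iff by simp_all
  have ax: "a \<noteq> x1" "a \<noteq> x3" "a \<noteq> c7" "a \<noteq> c8" if ha: "a \<in> {a4,a3,a2,a1,a0}" for a
  proof -
    obtain t where t: "a = al t" "5*n-4 \<le> t" "t \<le> 5*n" using ha n1
      unfolding a4_def a3_def a2_def a1_def a0_def by auto
    have t1: "1 \<le> t" using t n1 by linarith
    show "a \<noteq> x1" "a \<noteq> x3" using al_ne t1 t by auto
    show "a \<noteq> c7"
    proof (cases "n = 1")
      case True then show ?thesis using c7[of n] al_ne t1 t unfolding c7_def by auto
    next
      case False
      then have "1 \<le> 5*n-7" "5*n-7 \<noteq> t" using n1 t by auto
      then show ?thesis using c7[of n] False al_inj[OF t1] t unfolding c7_def by auto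
    qed
    show "a \<noteq> c8"
    proof (cases "n = 1")
      case True then show ?thesis using c8[of n] al_ne t1 t unfolding c8_def by auto
    next
      case False
      then have "1 \<le> 5*n-8" "5*n-8 \<noteq> t" using n1 t by auto
      then show ?thesis using c8[of n] False al_inj[OF t1] t unfolding c8_def by auto
    qed
  qed
  have newc: "a \<notin> coords D" if ha: "a \<in> {a4,a3,a2,a1,a0}" for a
  proof -
    obtain t where t: "a = al t" "5*n-4 \<le> t" using ha n1
      unfolding a4_def a3_def a2_def a1_def a0_def by auto
    show ?thesis unfolding D_def Dset_def coords_img t(1)
      using newD[OF n1 _ _ t(2)] n1 by auto
  qed
  have Asub: "Aset x1 y1 x2 y2 x3 z3 al n \<subseteq> {B1,B2,B3,B4,B5}"
  proof
    fix x assume x: "x \<in> Aset x1 y1 x2 y2 x3 z3 al n"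
    then obtain i where i: "i \<in> {1..5*n+3}" "x = P i" "x \<notin> P ` {1..5*(n-1)+3}"
      using n1 unfolding Aset_def Dset_def by auto
    have "i \<notin> {1..5*(n-1)+3}" using i by auto
    then have "i = 5*n-1 \<or> i = 5*n \<or> i = 5*n+1 \<or> i = 5*n+2 \<or> i = 5*n+3" using i(1) n1 by auto
    then show "x \<in> {B1,B2,B3,B4,B5}" using i(2) pt1[OF n1] pt2[OF n1] pt3[OF n1] pt4[OF n1] pt5[OF n1]
      unfolding B1_def B2_def B3_def B4_def B5_def a4_def a3_def a2_def a1_def a0_def c7_def c8_def
      by (elim disjE) simp_all
  qed
  define r where "r s = (if s = B1 then a4 else if s = B2 then a1 else if s = B3 then a0 else if s = B4 then a3 else a2)" for s
  have Bd: "B1 \<noteq> B2" "B1 \<noteq> B3" "B1 \<noteq> B4" "B1 \<noteq> B5" "B2 \<noteq> B3" "B2 \<noteq> B4" "B2 \<noteq> B5"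
     "B3 \<noteq> B4" "B3 \<noteq> B5" "B4 \<noteq> B5"
    unfolding B1_def B2_def B3_def B4_def B5_def using adist ax(1)[of a4] ax(1)[of a1] ax(3)[of a2] by simp_all
  have rv: "r B1 = a4" "r B2 = a1" "r B3 = a0" "r B4 = a3" "r B5 = a2"
    unfolding r_def using Bd by auto
  have rin: "r s \<in> coords {s}" "r s \<in> {a4,a3,a2,a1,a0}" if "s \<in> {B1,B2,B3,B4,B5}" for s
    using that rv unfolding B1_def B2_def B3_def B4_def B5_def by auto
  have rinj: "inj_on r {B1,B2,B3,B4,B5}"
    unfolding inj_on_def using rv adist adist[THEN not_sym] by (simp (no_asm_simp))
  have key: "card S = card (r ` S)" "r ` S \<subseteq> coords S" "r ` S \<inter> coords D = {}" "finite S" "finite (coords S)"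
    if "S \<subseteq> Aset x1 y1 x2 y2 x3 z3 al n" for S
  proof -
    have S5: "S \<subseteq> {B1,B2,B3,B4,B5}" using that Asub by auto
    show "card S = card (r ` S)" using card_image[OF inj_on_subset[OF rinj S5]] by simp
    show "r ` S \<subseteq> coords S"
    proof
      fix x assume "x \<in> r ` S"
      then obtain s where s: "s \<in> S" "x = r s" by blast
      have "s \<in> {B1,B2,B3,B4,B5}" using s(1) S5 by blast
      then have "x \<in> coords {s}" using rin(1) s(2) by simp
      then show "x \<in> coords S" using coords_mono[OF s(1)] by blast
    qed
    show "r ` S \<inter> coords D = {}"
    proof (rule ccontr)
      assume "r ` S \<inter> coords D \<noteq> {}"
      then obtain s where s: "s \<in> S" "r s \<in> coords D" by blast
      have "s \<in> {B1,B2,B3,B4,B5}" using s(1) S5 by blast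
      then have "r s \<in> {a4,a3,a2,a1,a0}" using rin(2) by simp
      then show False using newc s(2) by blast
    qed
    show fS: "finite S" using S5 finite_subset by blast
    show "finite (coords S)" using finite_coords[OF fS] .
  qed
  have part1: "card (coords S - coords D) \<ge> card S" if "S \<subseteq> Aset x1 y1 x2 y2 x3 z3 al n" for S
  proof -
    have "r ` S \<subseteq> coords S - coords D" using key[OF that] by blast
    then have "card (r ` S) \<le> card (coords S - coords D)"
      using key(5)[OF that] by (intro card_mono) auto
    then show ?thesis using key(1)[OF that] by simp
  qed
  have part2: "card (coords S - coords {p}) \<ge> card S + 1"
    if p: "p \<in> D" and S: "S \<subseteq> Aset x1 y1 x2 y2 x3 z3 al n" "S \<noteq> {}" for p S
  proof -
    have S5: "S \<subseteq> {B1,B2,B3,B4,B5}" using S Asub by auto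
    have pD: "coords {p} \<subseteq> coords D" using p coords_mono by blast
    obtain i where i: "i \<in> {1..5*(n-1)+3}" "p = P i" using p unfolding D_def Dset_def by auto
    have i1: "1 \<le> i" "i + 2 \<le> 5*n" using i n1 by auto
    have "\<exists>e. e \<in> coords S - coords {p} \<and> e \<notin> r ` S"
    proof (cases "B5 \<in> S")
      case True
      have xc: "x1 \<in> coords S" "c8 \<in> coords S" using coords_mono[OF True] unfolding B5_def by auto
      have rS: "r s \<in> {a4,a3,a2,a1,a0}" if "s \<in> S" for s using rin(2) S5 that by blast
      have "x1 \<notin> r ` S"
      proof
        assume "x1 \<in> r ` S"
        then obtain s where "s \<in> S" "x1 = r s" by blast
        then show False using ax(1)[OF rS] by metis
      qed
      moreover have "c8 \<notin> r ` S"
      proof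
        assume "c8 \<in> r ` S"
        then obtain s where "s \<in> S" "c8 = r s" by blast
        then show False using ax(4)[OF rS] by metis
      qed
      moreover have "x1 \<notin> coords {p} \<or> c8 \<notin> coords {p}"
      proof -
        have "x1 \<in> coords {p} \<Longrightarrow> c8 \<notin> coords {p}" using oldP[OF n1 i1] unfolding i(2) c8_def .
        then show ?thesis by blast
      qed
      ultimately show ?thesis using xc by blast
    next
      case False
      have a2n: "a2 \<notin> r ` S"
      proof
        assume "a2 \<in> r ` S"
        then obtain s where s: "s \<in> S" "r s = a2" by auto
        then have "s = B1 \<or> s = B2 \<or> s = B3 \<or> s = B4" using S5 False by blast
        then show False using s(2) rv adist by (elim disjE) simp_all
      qed
      show ?thesis
      proof (cases "B1 \<in> S \<or> B2 \<in> S")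
        case True
        have "a2 \<in> coords {B1}" "a2 \<in> coords {B2}" unfolding B1_def B2_def by simp_all
        then have "a2 \<in> coords S" using True coords_mono[of B1 S] coords_mono[of B2 S] by blast
        moreover have "a2 \<notin> coords {p}" using newc pD by blast
        ultimately show ?thesis using a2n by blast
      next
        case nB: False
        have S34: "S \<subseteq> {B3,B4}" using S5 False nB by blast
        show ?thesis
        proof (cases "B3 \<in> S")
          case True
          have "a4 \<in> coords S" using coords_mono[OF True] unfolding B3_def by auto
          moreover have "a4 \<notin> coords {p}" using newc pD by blast
          moreover have "a4 \<notin> r ` S" using S34 rv adist by auto
          ultimately show ?thesis by blast
        next
          case F3: False
          then have B4: "B4 \<in> S" using S S34 by blast
          have "a1 \<in> coords S" using coords_mono[OF B4] unfolding B4_def by auto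
          moreover have "a1 \<notin> coords {p}" using newc pD by blast
          moreover have "a1 \<notin> r ` S" using S34 F3 rv adist by auto
          ultimately show ?thesis by blast
        qed
      qed
    qed
    then obtain e where e: "e \<in> coords S - coords {p}" "e \<notin> r ` S" by blast
    have "insert e (r ` S) \<subseteq> coords S - coords {p}" using e key[OF S(1)] pD by blast
    then have "card (insert e (r ` S)) \<le> card (coords S - coords {p})"
      using key(5)[OF S(1)] by (intro card_mono) auto
    moreover have "card (insert e (r ` S)) = card S + 1"
      using e(2) key(1,4)[OF S(1)] by simp
    ultimately show ?thesis by simp
  qed
  show ?thesis using part1 part2 unfolding D_def by blast
qed

end

theorem mainTheorem2:
  fixes X1 X2 X3 :: "'a set" and x1 y1 x2 y2 x3 z3 :: 'a and al :: "nat \<Rightarrow> 'a" and n :: nat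
  assumes disj: "X1 \<inter> X2 = {}" "X1 \<inter> X3 = {}" "X2 \<inter> X3 = {}"
    and nonempty: "X1 \<noteq> {}" "X2 \<noteq> {}" "X3 \<noteq> {}"
    and mem1: "x1 \<in> X1" "y1 \<in> X1" "\<forall>k\<ge>1. al (5*k-4) \<in> X1 \<and> al (5*k-1) \<in> X1"
    and mem2: "x2 \<in> X2" "y2 \<in> X2" "\<forall>k\<ge>1. al (5*k-3) \<in> X2 \<and> al (5*k) \<in> X2"
    and mem3: "x3 \<in> X3" "z3 \<in> X3" "\<forall>k\<ge>1. al (5*k-2) \<in> X3"
    and dist1: "x1 \<noteq> y1" "\<forall>k\<ge>1. al (5*k-4) \<notin> {x1, y1} \<and> al (5*k-1) \<notin> {x1, y1}"
      "inj_on al ({5*k-4 | k. k \<ge> 1} \<union> {5*k-1 | k. k \<ge> 1})"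
    and dist2: "x2 \<noteq> y2" "\<forall>k\<ge>1. al (5*k-3) \<notin> {x2, y2} \<and> al (5*k) \<notin> {x2, y2}"
      "inj_on al ({5*k-3 | k. k \<ge> 1} \<union> {5*k | k. k \<ge> 1})"
    and dist3: "x3 \<noteq> z3" "\<forall>k\<ge>1. al (5*k-2) \<notin> {x3, z3}"
      "inj_on al {5*k-2 | k. k \<ge> 1}"
    and n1: "n \<ge> 1"
  shows "(\<forall>S. S \<subseteq> Aset x1 y1 x2 y2 x3 z3 al n \<and> S \<noteq> {} \<longrightarrow>
            card (coords S - coords (Dset x1 y1 x2 y2 x3 z3 al (n - 1))) \<ge> card S)
       \<and> (\<forall>p \<in> Dset x1 y1 x2 y2 x3 z3 al (n - 1). \<forall>S. S \<subseteq> Aset x1 y1 x2 y2 x3 z3 al n \<and> S \<noteq> {} \<longrightarrow>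
            card (coords S - coords {p}) \<ge> card S + 1)"
proof -
  interpret L X1 X2 X3 x1 y1 x2 y2 x3 z3 al
    unfolding L_def using disj mem1 mem2 mem3 dist1 dist2 dist3 by blast
  show ?thesis using main_loc[OF n1] .
qed

end
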